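(* Let $I$ be an interval and let $f:I\rightarrow\mathbb{R}$ be continuous on $I$ and of class $C^1$ on the interior $\operatorname{int}I$. Then the following are equivalent: (i) $f$ is $3$-convex; (ii) $f'\left(\frac{a+b}{2}\right)\leq\frac{f(b)-f(a)}{b-a}$ for all $a<b$ in $\operatorname{int}I$; (iii) $\frac{f(b)-f(a)}{b-a}\leq\frac{1}{2}\left(\frac{f'(a)+f'(b)}{2}+f'\left(\frac{a+b}{2}\right)\right)$ for all $a<b$ in $\operatorname{int}I$.
   Context: A function $f$ defined on an interval $I$ is called $3$-convex if for all $x_0<x_1<x_2<x_3$ in $I$ the third-order divided difference $[x_0,x_1,x_2,x_3;f]=\sum_{j=0}^{3}\frac{f(x_j)}{\prod_{k\neq j}(x_j-x_k)}$ is nonnegative. *)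

theory Defs
  imports "HOL-Analysis.Analysis"
begin

definition divdiff3 :: "(real \<Rightarrow> real) \<Rightarrow> real \<Rightarrow> real \<Rightarrow> real \<Rightarrow> real \<Rightarrow> real" where
  "divdiff3 f x0 x1 x2 x3 =
     (let xs = [x0, x1, x2, x3] in
      (\<Sum>j<4. f (xs ! j) / (\<Prod>k\<in>{..<4} - {j}. (xs ! j - xs ! k))))"

definition convex3_on :: "real set \<Rightarrow> (real \<Rightarrow> real) \<Rightarrow> bool" where
  "convex3_on I f \<longleftrightarrow>
     (\<forall>x0\<in>I. \<forall>x1\<in>I. \<forall>x2\<in>I. \<forall>x3\<in>I.
        x0 < x1 \<and> x1 < x2 \<and> x2 < x3 \<longrightarrow> divdiff3 f x0 x1 x2 x3 \<ge> 0)"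

end

theory Submission
  imports Defs
begin


lemma divdiff3_explicit:
  "divdiff3 f a b c d =
     f a / ((a-b)*(a-c)*(a-d)) + f b / ((b-a)*(b-c)*(b-d)) +
     f c / ((c-a)*(c-b)*(c-d)) + f d / ((d-a)*(d-b)*(d-c))"
proof -
  have s: "{..<4::nat} = {0,1,2,3}" by auto
  have d0: "{0,1,2,3::nat} - {0} = {1,2,3}" by auto
  have d1: "{0,1,2,3::nat} - {1} = {0,2,3}" by auto
  have d2: "{0,1,2,3::nat} - {2} = {0,1,3}" by auto
  have d3: "{0,1,2,3::nat} - {3} = {0,1,2}" by auto
  show ?thesis unfolding divdiff3_def Let_def s
    by (simp add: insert_Diff_if mult.assoc)
qed



lemma quot_lim:
  assumes "(k has_real_derivative D) (at 0)" "k 0 = 0"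
  shows "((\<lambda>t. k t / t) \<longlongrightarrow> D) (at_right 0)"
proof -
  have "((\<lambda>h. (k (0 + h) - k 0) / h) \<longlongrightarrow> D) (at 0)"
    using assms(1) by (simp add: DERIV_def)
  then have "((\<lambda>t. k t / t) \<longlongrightarrow> D) (at 0)" using assms(2) by simp
  then show ?thesis by (rule Lim_at_imp_Lim_at_within)
qed

lemma divdiff_sym:
  assumes "0 < t" "t < h"
  shows "divdiff3 f (m-h) (m-t) (m+t) (m+h) =
    ((f (m+h) - f (m-h)) / (2*h) - (f (m+t) - f (m-t)) / (2*t)) / (h^2 - t^2)"
proof -
  have p: "h^2 - t^2 > 0" using assms by (simp add: power_strict_mono)
  have e1: "((m-h)-(m-t))*((m-h)-(m+t))*((m-h)-(m+h)) = -(2*h*(h^2-t^2))"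
    by (simp add: algebra_simps power2_eq_square)
  have e2: "((m-t)-(m-h))*((m-t)-(m+t))*((m-t)-(m+h)) = 2*t*(h^2-t^2)"
    by (simp add: algebra_simps power2_eq_square)
  have e3: "((m+t)-(m-h))*((m+t)-(m-t))*((m+t)-(m+h)) = -(2*t*(h^2-t^2))"
    by (simp add: algebra_simps power2_eq_square)
  have e4: "((m+h)-(m-h))*((m+h)-(m-t))*((m+h)-(m+t)) = 2*h*(h^2-t^2)"
    by (simp add: algebra_simps power2_eq_square)
  define d where "d = h^2 - t^2"
  have d0: "d \<noteq> 0" using p by (simp add: d_def)
  have alg: "\<And>A B C D::real. A / - (2*h*d) + B / (2*t*d) + C / -(2*t*d) + D/(2*h*d)
   = ((D - A) / (2*h) - (C - B) / (2*t)) / d"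
    using d0 assms by (simp add: diff_divide_distrib add_divide_distrib divide_divide_eq_left mult.commute mult.left_commute)
  show ?thesis unfolding divdiff3_explicit e1 e2 e3 e4 d_def[symmetric] alg ..
qed



lemma deriv_shift_pm:
  assumes "(f has_real_derivative D) (at m)"
  shows "((\<lambda>z. f (m + z)) has_real_derivative D) (at 0)"
    and "((\<lambda>z. f (m - z)) has_real_derivative -D) (at 0)"
proof -
  have "((\<lambda>z. f (m + z)) has_real_derivative D * 1) (at 0)"
    by (rule DERIV_chain2[where f=f]) (use assms in \<open>auto intro!: derivative_eq_intros\<close>)
  then show "((\<lambda>z. f (m + z)) has_real_derivative D) (at 0)" by simp
  have "((\<lambda>z. f (m - z)) has_real_derivative D * (-1)) (at 0)"
    by (rule DERIV_chain2[where f=f]) (use assms in \<open>auto intro!: derivative_eq_intros\<close>)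
  then show "((\<lambda>z. f (m - z)) has_real_derivative -D) (at 0)" by simp
qed

lemma stepA:
  assumes conv: "convex3_on I f" and JI: "J \<subseteq> I"
    and der: "\<forall>x\<in>J. (f has_real_derivative g x) (at x)"
    and iv: "\<forall>a\<in>J. \<forall>b\<in>J. \<forall>x. a \<le> x \<and> x \<le> b \<longrightarrow> x \<in> J"
  shows "\<forall>a\<in>J. \<forall>b\<in>J. a < b \<longrightarrow> g ((a+b)/2) \<le> (f b - f a) / (b - a)"
proof (intro ballI impI)
  fix a b assume a: "a \<in> J" and b: "b \<in> J" and ab: "a < b"
  define m where "m = (a+b)/2"
  define h where "h = (b-a)/2"
  have h0: "h > 0" using ab by (simp add: h_def)
  have am: "a = m - h" and bm: "b = m + h" by (simp_all add: m_def h_def field_simps)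
  have mJ: "m \<in> J" using iv[rule_format, OF a b, of m] ab by (simp add: m_def)
  define k where "k t = f (m + t) - f (m - t)" for t
  have "(k has_real_derivative (g m + g m)) (at 0)"
    unfolding k_def using der mJ deriv_shift_pm[of f "g m" m]
    by (auto intro!: derivative_eq_intros)
  then have lim: "((\<lambda>t. k t / t) \<longlongrightarrow> g m + g m) (at_right 0)"
    by (rule quot_lim) (simp add: k_def)
  have ev: "\<forall>\<^sub>F t in at_right 0. k t / t \<le> 2 * ((f b - f a) / (b - a))"
    unfolding eventually_at_right_field
  proof (intro exI[of _ h] conjI allI impI)
    show "0 < h" by fact
    fix t :: real assume t: "0 < t" "t < h"
    have "m - t \<in> J" using iv[rule_format, OF a b, of "m-t"] t unfolding am bm by simp
    moreover have "m + t \<in> J" using iv[rule_format, OF a b, of "m+t"] t unfolding am bm by simp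
    ultimately have "m - t \<in> J" "m + t \<in> J" by auto
    then have in1: "m - h \<in> I" "m - t \<in> I" "m + t \<in> I" "m + h \<in> I"
      using a b JI unfolding am bm by auto
    have "divdiff3 f (m-h) (m-t) (m+t) (m+h) \<ge> 0"
      using conv in1 t unfolding convex3_on_def by auto
    then have "(f (m+t) - f (m-t)) / (2*t) \<le> (f (m+h) - f (m-h)) / (2*h)"
      using t by (simp add: divdiff_sym zero_le_divide_iff power_strict_mono)
    then show "k t / t \<le> 2 * ((f b - f a) / (b - a))"
    proof -
      have "(f b - f a) / (b - a) = (f (m+h) - f (m-h)) / (2*h)"
        unfolding am bm by simp
      moreover have "k t / t = 2 * ((f (m+t) - f (m-t)) / (2*t))" using t by (simp add: k_def field_simps)
      ultimately show ?thesis using \<open>(f (m+t) - f (m-t)) / (2*t) \<le> (f (m+h) - f (m-h)) / (2*h)\<close>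
        by linarith
    qed
  qed
  have "g m + g m \<le> 2 * ((f b - f a) / (b - a))"
    by (rule tendsto_upperbound[OF lim ev]) simp
  then have "g m \<le> (f b - f a) / (b - a)" by linarith
  then show "g ((a+b)/2) \<le> (f b - f a) / (b - a)" by (simp only: m_def)
qed



lemma canc3:
  fixes k a b c :: real
  assumes "b \<noteq> 0" "c \<noteq> 0"
  shows "k*b*c/(a*b*c) = k/a"
proof -
  have "k*b*c/(a*b*c) = (k*(b*c))/(a*(b*c))" by (simp add: mult.assoc)
  also have "\<dots> = k/a" using assms by (intro nonzero_mult_divide_mult_cancel_right) simp
  finally show ?thesis .
qed

lemma stepC:
  assumes ivI: "\<forall>a\<in>I. \<forall>b\<in>I. \<forall>x. a \<le> x \<and> x \<le> b \<longrightarrow> x \<in> I"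
    and IJ: "\<forall>a\<in>I. \<forall>b\<in>I. \<forall>x. a < x \<and> x < b \<longrightarrow> x \<in> J"
    and contf: "continuous_on I f"
    and der: "\<forall>x\<in>J. (f has_real_derivative g x) (at x)"
    and cvx: "\<forall>x\<in>J. \<forall>y\<in>J. \<forall>z\<in>J. x < y \<longrightarrow> y < z \<longrightarrow>
                 g y \<le> ((z - y) * g x + (y - x) * g z) / (z - x)"
  shows "convex3_on I f"
  unfolding convex3_on_def
proof (intro ballI impI)
  fix x0 x1 x2 x3 assume I: "x0 \<in> I" "x1 \<in> I" "x2 \<in> I" "x3 \<in> I"
    and lt: "x0 < x1 \<and> x1 < x2 \<and> x2 < x3"
  then have lt0: "x0 < x1" "x1 < x2" "x2 < x3" by auto
  define c0 where "c0 = f x0 / ((x0-x1)*(x0-x2))"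
  define c1 where "c1 = f x1 / ((x1-x0)*(x1-x2))"
  define c2 where "c2 = f x2 / ((x2-x0)*(x2-x1))"
  define P where "P x = c0*(x-x1)*(x-x2) + c1*(x-x0)*(x-x2) + c2*(x-x0)*(x-x1)" for x
  define A where "A = -(c0*(x1+x2) + c1*(x0+x2) + c2*(x0+x1))"
  define B where "B = 2*(c0+c1+c2)"
  define e where "e x = f x - P x" for x
  have dP: "(P has_real_derivative (A + B*x)) (at x)" for x
    unfolding P_def A_def B_def
    by (auto intro!: derivative_eq_intros simp: algebra_simps)
  have P0: "P x0 = f x0"
  proof -
    have nz: "(x0-x1)*(x0-x2) \<noteq> 0" using lt0 by simp
    have "c0*(x0-x1)*(x0-x2) = f x0" unfolding c0_def using nz by (simp add: mult.assoc)
    then show ?thesis unfolding P_def by (simp add: algebra_simps)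
  qed
  have P1: "P x1 = f x1"
  proof -
    have nz: "(x1-x0)*(x1-x2) \<noteq> 0" using lt0 by simp
    have "c1*(x1-x0)*(x1-x2) = f x1" unfolding c1_def using nz by (simp add: mult.assoc)
    then show ?thesis unfolding P_def by (simp add: algebra_simps)
  qed
  have P2: "P x2 = f x2"
  proof -
    have nz: "(x2-x0)*(x2-x1) \<noteq> 0" using lt0 by simp
    have "c2*(x2-x0)*(x2-x1) = f x2" unfolding c2_def using nz by (simp add: mult.assoc)
    then show ?thesis unfolding P_def by (simp add: algebra_simps)
  qed
  have t0: "f x0 / ((x0-x1)*(x0-x2)*(x0-x3)) = - (c0 / (x3-x0))"
    proof -
    have "(x0-x1)*(x0-x2)*(x0-x3) = -(((x0-x1)*(x0-x2))*(x3-x0))" by (simp add: algebra_simps)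
    then show ?thesis unfolding c0_def by (simp add: divide_divide_eq_left)
  qed
  have t1: "f x1 / ((x1-x0)*(x1-x2)*(x1-x3)) = - (c1 / (x3-x1))"
    proof -
    have "(x1-x0)*(x1-x2)*(x1-x3) = -(((x1-x0)*(x1-x2))*(x3-x1))" by (simp add: algebra_simps)
    then show ?thesis unfolding c1_def by (simp add: divide_divide_eq_left)
  qed
  have t2: "f x2 / ((x2-x0)*(x2-x1)*(x2-x3)) = - (c2 / (x3-x2))"
    proof -
    have "(x2-x0)*(x2-x1)*(x2-x3) = -(((x2-x0)*(x2-x1))*(x3-x2))" by (simp add: algebra_simps)
    then show ?thesis unfolding c2_def by (simp add: divide_divide_eq_left)
  qed
  have t3: "P x3 / ((x3-x0)*(x3-x1)*(x3-x2)) = c0/(x3-x0) + c1/(x3-x1) + c2/(x3-x2)"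
  proof -
    have n: "x3-x0 \<noteq> 0" "x3-x1 \<noteq> 0" "x3-x2 \<noteq> 0" using lt0 by auto
    have a0: "c0*(x3-x1)*(x3-x2) / ((x3-x0)*(x3-x1)*(x3-x2)) = c0/(x3-x0)"
      by (rule canc3[OF n(2,3)])
    have a1: "c1*(x3-x0)*(x3-x2) / ((x3-x0)*(x3-x1)*(x3-x2)) = c1/(x3-x1)"
    proof -
      have r: "(x3-x0)*(x3-x1)*(x3-x2) = (x3-x1)*(x3-x0)*(x3-x2)" by (simp add: algebra_simps)
      show ?thesis unfolding r by (rule canc3[OF n(1,3)])
    qed
    have a2: "c2*(x3-x0)*(x3-x1) / ((x3-x0)*(x3-x1)*(x3-x2)) = c2/(x3-x2)"
    proof -
      have r: "(x3-x0)*(x3-x1)*(x3-x2) = (x3-x2)*(x3-x0)*(x3-x1)" by (simp add: algebra_simps)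
      show ?thesis unfolding r by (rule canc3[OF n(1,2)])
    qed
    show ?thesis unfolding P_def add_divide_distrib a0 a1 a2 ..
  qed
  have dd: "divdiff3 f x0 x1 x2 x3 = e x3 / ((x3-x0)*(x3-x1)*(x3-x2))"
    unfolding divdiff3_explicit t0 t1 t2 e_def diff_divide_distrib t3 by simp
  have de: "(e has_real_derivative (g x - (A + B*x))) (at x)" if "x \<in> J" for x
  proof -
    have "(f has_real_derivative g x) (at x)" using der that by blast
    from DERIV_diff[OF this dP[of x]] show ?thesis unfolding e_def .
  qed
  have contI: "continuous_on {u..v} e" if "u \<in> I" "v \<in> I" for u v
  proof -
    have "{u..v} \<subseteq> I"
    proof
      fix x assume "x \<in> {u..v}"
      then show "x \<in> I" using ivI[rule_format, OF that(1) that(2), of x] by simp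
    qed
    then have "continuous_on {u..v} f" using contf continuous_on_subset by blast
    then show ?thesis unfolding e_def P_def by (intro continuous_intros)
  qed
  have diffI: "e differentiable (at x)" if "u \<in> I" "v \<in> I" "u < x" "x < v" for u v x
    using de[of x] IJ[rule_format, OF that(1) that(2), of x] that real_differentiable_def by blast
  have inJ: "x \<in> J" if "u \<in> I" "v \<in> I" "u < x" "x < v" for u v x
    using IJ[rule_format, OF that(1) that(2), of x] that by blast
  obtain \<xi>1 where \<xi>1: "x0 < \<xi>1" "\<xi>1 < x1" "(e has_real_derivative 0) (at \<xi>1)"
    using Rolle[of x0 x1 e] lt0 contI[OF I(1,2)] diffI[OF I(1,2)]
    by (auto simp: e_def P0 P1)
  obtain \<xi>2 where \<xi>2: "x1 < \<xi>2" "\<xi>2 < x2" "(e has_real_derivative 0) (at \<xi>2)"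
    using Rolle[of x1 x2 e] lt0 contI[OF I(2,3)] diffI[OF I(2,3)]
    by (auto simp: e_def P1 P2)
  obtain l z where z: "x2 < z" "z < x3" "(e has_real_derivative l) (at z)" "e x3 - e x2 = (x3 - x2) * l"
    using MVT[of x2 x3 e] lt0 contI[OF I(3,4)] diffI[OF I(3,4)] by blast
  have J1: "\<xi>1 \<in> J" using inJ[OF I(1) I(4)] \<xi>1 lt0 by auto
  have J2: "\<xi>2 \<in> J" using inJ[OF I(1) I(4)] \<xi>2 lt0 by auto
  have J3: "z \<in> J" using inJ[OF I(1) I(4)] z lt0 by auto
  have g1: "g \<xi>1 = A + B*\<xi>1" using DERIV_unique[OF \<xi>1(3) de[OF J1]] by simp
  have g2: "g \<xi>2 = A + B*\<xi>2" using DERIV_unique[OF \<xi>2(3) de[OF J2]] by simp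
  have l: "l = g z - (A + B*z)" using DERIV_unique[OF z(3) de[OF J3]] .
  have o12: "\<xi>1 < \<xi>2" "\<xi>2 < z" using \<xi>1 \<xi>2 z by auto
  have c: "g \<xi>2 \<le> ((z - \<xi>2) * g \<xi>1 + (\<xi>2 - \<xi>1) * g z) / (z - \<xi>1)"
    using cvx[rule_format, OF J1 J2 J3 o12] .
  then have "(z - \<xi>1) * g \<xi>2 \<le> (z - \<xi>2) * g \<xi>1 + (\<xi>2 - \<xi>1) * g z"
    using o12 by (simp add: field_simps)
  moreover have "(z - \<xi>1) * (A + B*\<xi>2) = (z - \<xi>2) * (A + B*\<xi>1) + (\<xi>2 - \<xi>1) * (A + B*z)"
    by (simp add: algebra_simps)
  ultimately have "(\<xi>2 - \<xi>1) * (g z - (A + B*z)) \<ge> 0"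
    unfolding g1 g2 by (simp add: algebra_simps)
  then have "l \<ge> 0" using o12 l by (simp add: zero_le_mult_iff)
  moreover have "e x2 = 0" by (simp add: e_def P2)
  ultimately have "e x3 \<ge> 0" using z(4) lt0 by simp
  then show "divdiff3 f x0 x1 x2 x3 \<ge> 0"
    unfolding dd using lt0 by simp
qed



lemma deriv_plus:
  assumes "(f has_real_derivative D) (at (m + s))"
  shows "((\<lambda>z. f (m + z)) has_real_derivative D) (at s)"
proof -
  have "((\<lambda>z. f (m + z)) has_real_derivative D * 1) (at s)"
    by (rule DERIV_chain2[where f=f]) (use assms in \<open>auto intro!: derivative_eq_intros\<close>)
  then show ?thesis by simp
qed

lemma deriv_minus:
  assumes "(f has_real_derivative D) (at (m - s))"
  shows "((\<lambda>z. f (m - z)) has_real_derivative -D) (at s)"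
proof -
  have "((\<lambda>z. f (m - z)) has_real_derivative D * (-1)) (at s)"
    by (rule DERIV_chain2[where f=f]) (use assms in \<open>auto intro!: derivative_eq_intros\<close>)
  then show ?thesis by simp
qed

lemma stepD:
  assumes der: "\<forall>x\<in>J. (f has_real_derivative g x) (at x)"
    and iv: "\<forall>a\<in>J. \<forall>b\<in>J. \<forall>x. a \<le> x \<and> x \<le> b \<longrightarrow> x \<in> J"
    and cvx: "\<forall>x\<in>J. \<forall>y\<in>J. \<forall>z\<in>J. x < y \<longrightarrow> y < z \<longrightarrow>
                 g y \<le> ((z - y) * g x + (y - x) * g z) / (z - x)"
  shows "\<forall>a\<in>J. \<forall>b\<in>J. a < b \<longrightarrow>
           (f b - f a) / (b - a) \<le> 1/2 * ((g a + g b) / 2 + g ((a + b) / 2))"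
proof (intro ballI impI)
  fix a b assume a: "a \<in> J" and b: "b \<in> J" and ab: "a < b"
  define m where "m = (a+b)/2"
  define h where "h = (b-a)/2"
  have h0: "h > 0" using ab by (simp add: h_def)
  have am: "a = m - h" and bm: "b = m + h" by (simp_all add: m_def h_def field_simps)
  have inJ: "m + s \<in> J" "m - s \<in> J" if "0 \<le> s" "s \<le> h" for s
    using iv[rule_format, OF a b, of "m+s"] iv[rule_format, OF a b, of "m-s"] that
    unfolding am bm by auto
  define \<psi> where "\<psi> s = g (m+s) + g (m-s) - 2 * g m" for s
  have psi: "\<psi> s \<le> s / h * \<psi> h" if s: "0 \<le> s" "s \<le> h" for s
  proof (cases "s = 0 \<or> s = h")
    case True
    then show ?thesis using h0 by (auto simp: \<psi>_def)
  next
    case False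
    then have s': "0 < s" "s < h" using s by auto
    have mJ: "m \<in> J" using inJ[of 0] h0 by simp
    have c1: "g (m+s) \<le> ((m+h - (m+s)) * g m + (m+s - m) * g (m+h)) / (m+h - m)"
      using cvx[rule_format, OF mJ inJ(1)[OF s] inJ(1)[of h]] s' h0 by simp
    have c2: "g (m-s) \<le> ((m - (m-s)) * g (m-h) + (m-s - (m-h)) * g m) / (m - (m-h))"
      using cvx[rule_format, OF inJ(2)[of h] inJ(2)[OF s] mJ] s' h0 by simp
    have c1': "h * g (m+s) \<le> (h - s) * g m + s * g (m+h)" using c1 h0 by (simp add: field_simps)
    have c2': "h * g (m-s) \<le> s * g (m-h) + (h - s) * g m" using c2 h0 by (simp add: field_simps)
    have "h * \<psi> s \<le> s * \<psi> h" using c1' c2' unfolding \<psi>_def by (simp add: algebra_simps)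
    then show ?thesis using h0 by (simp add: field_simps)
  qed
  define Kc where "Kc = \<psi> h / (2*h)"
  define \<Theta> where "\<Theta> s = f (m+s) - f (m-s) - (2 * g m) * s - Kc * s^2" for s
  have dT: "(\<Theta> has_real_derivative (\<psi> s - s * \<psi> h / h)) (at s)" if "s \<in> {0..h}" for s
  proof -
    have d1: "((\<lambda>z. f (m + z)) has_real_derivative g (m+s)) (at s)"
      using der inJ(1)[of s] that by (intro deriv_plus) auto
    have d2: "((\<lambda>z. f (m - z)) has_real_derivative - g (m-s)) (at s)"
      using der inJ(2)[of s] that by (intro deriv_minus) auto
    have d3: "((\<lambda>z. (2*g m)*z) has_real_derivative (2*g m)) (at s)"
      using DERIV_cmult[OF DERIV_ident, of "2*g m"] by simp
    have d4: "((\<lambda>z. Kc*z^2) has_real_derivative (Kc*(2* s))) (at s)"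
      by (auto intro!: derivative_eq_intros)
    have "\<Theta> = (\<lambda>z. f (m + z) - f (m - z) - (2*g m)*z - Kc*z^2)"
      by (rule ext) (simp add: \<Theta>_def)
    moreover have "g (m+s) - - g (m-s) - 2*g m - Kc*(2* s) = \<psi> s - s * \<psi> h / h"
      using h0 unfolding Kc_def \<psi>_def by (simp add: field_simps)
    ultimately show ?thesis
      using DERIV_diff[OF DERIV_diff[OF DERIV_diff[OF d1 d2] d3] d4] by simp
  qed
  have "\<Theta> h \<le> \<Theta> 0"
  proof (rule deriv_nonpos_imp_antimono[OF dT])
    fix s assume "s \<in> {0..h}"
    then show "\<psi> s - s * \<psi> h / h \<le> 0" using psi[of s] by auto
  qed (use h0 in auto)
  then have "f b - f a - 2 * h * g m - h^2 * \<psi> h / (2*h) \<le> 0"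
    unfolding \<Theta>_def Kc_def am bm by (simp add: mult_ac)
  moreover have "h^2 * \<psi> h / (2*h) = h * \<psi> h / 2" using h0 by (simp add: power2_eq_square)
  ultimately have "f b - f a \<le> 2 * h * g m + h * \<psi> h / 2" by linarith
  moreover have "h * \<psi> h / 2 = h * (g a + g b) / 2 - h * g m"
    unfolding \<psi>_def am bm by (simp add: field_simps)
  ultimately have "f b - f a \<le> h * (g a + g b) / 2 + h * g m" by linarith
  moreover have "(1/2 * ((g a + g b) / 2 + g m)) * (2 * h) = h * (g a + g b) / 2 + h * g m"
    by (simp add: field_simps)
  ultimately have fin: "f b - f a \<le> (1/2 * ((g a + g b) / 2 + g m)) * (2 * h)"
    by linarith
  have "b - a = 2 * h" by (simp add: h_def)
  then show "(f b - f a) / (b - a) \<le> 1/2 * ((g a + g b) / 2 + g ((a + b) / 2))"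
    using fin h0 unfolding m_def[symmetric] by (simp add: pos_divide_le_eq)
qed



lemma strict_dec:
  fixes \<Theta> \<phi> :: "real \<Rightarrow> real" and p q M :: real
  assumes pq: "p < q"
    and d: "\<And>t. t \<in> {p..q} \<Longrightarrow> (\<Theta> has_real_derivative (\<phi> t - M)) (at t)"
    and le: "\<And>t. t \<in> {p..q} \<Longrightarrow> \<phi> t \<le> M"
    and c: "continuous_on {p..q} \<phi>"
    and e: "\<phi> p < M \<or> \<phi> q < M"
  shows "\<Theta> q < \<Theta> p"
  using e
proof
  assume lt: "\<phi> p < M"
  obtain dd where dd: "dd > 0" "\<And>t. t \<in> {p..q} \<Longrightarrow> dist t p < dd \<Longrightarrow> dist (\<phi> t) (\<phi> p) < M - \<phi> p"
    using c pq lt unfolding continuous_on_iff by (metis atLeastAtMost_iff diff_gt_0_iff_gt order_less_imp_le order_refl)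
  define \<eta> where "\<eta> = min (dd/2) ((q-p)/2)"
  have \<eta>1: "\<eta> \<le> dd/2" "\<eta> \<le> (q-p)/2" "\<eta> > 0"
    unfolding \<eta>_def by (rule min.cobounded1, rule min.cobounded2, use dd pq in simp)
  have \<eta>a: "0 < \<eta>" using \<eta>1 by linarith
  have \<eta>b: "\<eta> < dd" using \<eta>1 dd by linarith
  have \<eta>c: "p + \<eta> < q" using \<eta>1 pq by (simp add: field_simps)
  note \<eta> = \<eta>a \<eta>b \<eta>c
  have small: "\<phi> t < M" if "t \<in> {p..p+\<eta>}" for t
  proof -
    have "t \<in> {p..q}" using that \<eta> by auto
    moreover have "dist t p < dd" using that \<eta> by (auto simp: dist_real_def)
    ultimately have "dist (\<phi> t) (\<phi> p) < M - \<phi> p" by (rule dd(2))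
    then show ?thesis by (auto simp: dist_real_def)
  qed
  obtain \<xi> where \<xi>: "p < \<xi>" "\<xi> < p + \<eta>" "\<Theta> (p+\<eta>) - \<Theta> p = (p + \<eta> - p) * (\<phi> \<xi> - M)"
    using MVT2[of p "p+\<eta>" \<Theta> "\<lambda>t. \<phi> t - M"] \<eta> d by auto
  have "\<phi> \<xi> - M < 0" using small[of \<xi>] \<xi> by auto
  then have "\<eta> * (\<phi> \<xi> - M) < 0" using \<eta> by (simp add: mult_pos_neg)
  moreover have "\<Theta> (p+\<eta>) - \<Theta> p = \<eta> * (\<phi> \<xi> - M)" using \<xi>(3) by simp
  ultimately have s1: "\<Theta> (p+\<eta>) < \<Theta> p" by linarith
  have "\<Theta> q \<le> \<Theta> (p+\<eta>)"
    by (rule deriv_nonpos_imp_antimono[of "p+\<eta>" q \<Theta> "\<lambda>t. \<phi> t - M"]) (use d le \<eta> in auto)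
  then show ?thesis using s1 by simp
next
  assume lt: "\<phi> q < M"
  obtain dd where dd: "dd > 0" "\<And>t. t \<in> {p..q} \<Longrightarrow> dist t q < dd \<Longrightarrow> dist (\<phi> t) (\<phi> q) < M - \<phi> q"
    using c pq lt unfolding continuous_on_iff by (metis atLeastAtMost_iff diff_gt_0_iff_gt order_less_imp_le order_refl)
  define \<eta> where "\<eta> = min (dd/2) ((q-p)/2)"
  have \<eta>1: "\<eta> \<le> dd/2" "\<eta> \<le> (q-p)/2" "\<eta> > 0"
    unfolding \<eta>_def by (rule min.cobounded1, rule min.cobounded2, use dd pq in simp)
  have \<eta>a: "0 < \<eta>" using \<eta>1 by linarith
  have \<eta>b: "\<eta> < dd" using \<eta>1 dd by linarith
  have \<eta>c: "p < q - \<eta>" using \<eta>1 pq by (simp add: field_simps)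
  note \<eta> = \<eta>a \<eta>b \<eta>c
  have small: "\<phi> t < M" if "t \<in> {q-\<eta>..q}" for t
  proof -
    have "t \<in> {p..q}" using that \<eta> by auto
    moreover have "dist t q < dd" using that \<eta> by (auto simp: dist_real_def)
    ultimately have "dist (\<phi> t) (\<phi> q) < M - \<phi> q" by (rule dd(2))
    then show ?thesis by (auto simp: dist_real_def)
  qed
  obtain \<xi> where \<xi>: "q - \<eta> < \<xi>" "\<xi> < q" "\<Theta> q - \<Theta> (q - \<eta>) = (q - (q - \<eta>)) * (\<phi> \<xi> - M)"
    using MVT2[of "q-\<eta>" q \<Theta> "\<lambda>t. \<phi> t - M"] \<eta> d by auto
  have "\<phi> \<xi> - M < 0" using small[of \<xi>] \<xi> by auto
  then have "\<eta> * (\<phi> \<xi> - M) < 0" using \<eta> by (simp add: mult_pos_neg)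
  moreover have "\<Theta> q - \<Theta> (q - \<eta>) = \<eta> * (\<phi> \<xi> - M)" using \<xi>(3) by simp
  ultimately have s1: "\<Theta> q < \<Theta> (q - \<eta>)" by linarith
  have "\<Theta> (q - \<eta>) \<le> \<Theta> p"
    by (rule deriv_nonpos_imp_antimono[of p "q-\<eta>" \<Theta> "\<lambda>t. \<phi> t - M"]) (use d le \<eta> in auto)
  then show ?thesis using s1 by simp
qed



lemma stepB:
  assumes der: "\<forall>x\<in>J. (f has_real_derivative g x) (at x)"
    and iv: "\<forall>a\<in>J. \<forall>b\<in>J. \<forall>x. a \<le> x \<and> x \<le> b \<longrightarrow> x \<in> J"
    and contg: "continuous_on J g"
    and P2: "\<forall>a\<in>J. \<forall>b\<in>J. a < b \<longrightarrow> g ((a+b)/2) \<le> (f b - f a) / (b - a)"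
  shows "\<forall>x\<in>J. \<forall>y\<in>J. \<forall>z\<in>J. x < y \<longrightarrow> y < z \<longrightarrow>
                 g y \<le> ((z - y) * g x + (y - x) * g z) / (z - x)"
proof (intro ballI impI)
  fix x y z assume xJ: "x \<in> J" and yJ: "y \<in> J" and zJ: "z \<in> J" and xy: "x < y" and yz: "y < z"
  show "g y \<le> ((z - y) * g x + (y - x) * g z) / (z - x)"
  proof (rule ccontr)
    assume "\<not> ?thesis"
    then have gy: "g y > ((z - y) * g x + (y - x) * g z) / (z - x)" by simp
    define s where "s = (g z - g x) / (z - x)"
    define \<phi> where "\<phi> t = g t - (g x + s * (t - x))" for t
    have xz: "x < z" using xy yz by simp
    have \<phi>x: "\<phi> x = 0" by (simp add: \<phi>_def)
    have \<phi>z: "\<phi> z = 0" using xz by (simp add: \<phi>_def s_def)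
    have "((z - y) * g x + (y - x) * g z) / (z - x) = g x + s * (y - x)"
      using xz by (simp add: s_def field_simps)
    then have \<phi>y: "\<phi> y > 0" using gy by (simp add: \<phi>_def)
    have sub: "{x..z} \<subseteq> J"
    proof
      fix t assume "t \<in> {x..z}"
      then show "t \<in> J" using iv[rule_format, OF xJ zJ, of t] by simp
    qed
    have cont\<phi>: "continuous_on {x..z} \<phi>"
      unfolding \<phi>_def by (intro continuous_intros continuous_on_subset[OF contg sub])
    obtain c where c: "c \<in> {x..z}" and cmax: "\<And>t. t \<in> {x..z} \<Longrightarrow> \<phi> t \<le> \<phi> c"
      using continuous_attains_sup[OF compact_Icc _ cont\<phi>] xz by auto
    define M where "M = \<phi> c"
    have M0: "M > 0" using cmax[of y] \<phi>y xy yz unfolding M_def by auto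
    have cx: "x < c" using c M0 \<phi>x unfolding M_def by (cases "c = x") auto
    have cz: "c < z" using c M0 \<phi>z unfolding M_def by (cases "c = z") auto
    define \<Theta> where "\<Theta> t = f t - (g x * t + s * (t - x)^2 / 2) - M * t" for t
    have d\<Theta>: "(\<Theta> has_real_derivative (\<phi> t - M)) (at t)" if "t \<in> {x..z}" for t
    proof -
      have df: "(f has_real_derivative g t) (at t)" using der sub that by blast
      show ?thesis unfolding \<Theta>_def \<phi>_def
        by (auto intro!: derivative_eq_intros df simp: field_simps)
    qed
    have contra: False if pq: "x \<le> p" "p < q" "q \<le> z" "(p + q) / 2 = c" "\<phi> p < M \<or> \<phi> q < M" for p q
    proof -
      have pJ: "p \<in> J" and qJ: "q \<in> J" using sub pq by auto
      have "g c \<le> (f q - f p) / (q - p)" using P2[rule_format, OF pJ qJ pq(2)] pq(4) by simp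
      then have "(q - p) * g c \<le> f q - f p" using pq by (simp add: field_simps)
      moreover have "(g x * q + s * (q - x)^2 / 2) - (g x * p + s * (p - x)^2 / 2)
                      = (q - p) * (g x + s * (c - x))"
        unfolding pq(4)[symmetric] by (simp add: power2_eq_square field_simps)
      ultimately have "\<Theta> q - \<Theta> p \<ge> (q - p) * (\<phi> c - M)"
        unfolding \<Theta>_def \<phi>_def by (simp add: algebra_simps)
      then have ge: "\<Theta> q \<ge> \<Theta> p" unfolding M_def by simp
      have "\<Theta> q < \<Theta> p"
      proof (rule strict_dec[where \<Theta> = \<Theta> and \<phi> = \<phi> and M = M and p = p and q = q])
        show "p < q" by fact
        show "\<And>t. t \<in> {p..q} \<Longrightarrow> (\<Theta> has_real_derivative \<phi> t - M) (at t)"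
          using d\<Theta> pq by auto
        show "\<And>t. t \<in> {p..q} \<Longrightarrow> \<phi> t \<le> M"
          using cmax pq unfolding M_def by auto
        show "continuous_on {p..q} \<phi>"
          using cont\<phi> by (rule continuous_on_subset) (use pq in auto)
        show "\<phi> p < M \<or> \<phi> q < M" by fact
      qed
      then show False using ge by simp
    qed
    show False
    proof (cases "c - x \<le> z - c")
      case True
      show False by (rule contra[of x "2*c - x"]) (use True cx \<phi>x M0 in auto)
    next
      case False
      show False by (rule contra[of "2*c - z" z]) (use False cz \<phi>z M0 in auto)
    qed
  qed
qed



lemma key_mono:
  fixes R R' :: "real \<Rightarrow> real" and h :: real
  assumes h: "h > 0"
    and dR: "\<And>t. 0 < t \<Longrightarrow> t \<le> h \<Longrightarrow> (R has_real_derivative R' t) (at t)"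
    and ineq: "\<And>t. 0 < t \<Longrightarrow> t \<le> h \<Longrightarrow> 2 * R t \<le> t * R' t"
    and lim0: "(R \<longlongrightarrow> 0) (at_right 0)"
    and limq: "((\<lambda>t. R' t / (2 * t)) \<longlongrightarrow> 0) (at_right 0)"
  shows "R h \<ge> 0"
proof -
  define Q where "Q t = R t / (t * t)" for t
  have mono: "Q t \<le> Q h" if t: "0 < t" "t \<le> h" for t
  proof (rule deriv_nonneg_imp_mono[of t h Q "\<lambda>u. (R' u * (u * u) - R u * (2 * u)) / ((u * u) * (u * u))"])
    fix u assume u: "u \<in> {t..h}"
    then have u0: "u > 0" "u \<le> h" using t by auto
    show "(Q has_real_derivative (R' u * (u * u) - R u * (2 * u)) / ((u * u) * (u * u))) (at u)"
      unfolding Q_def using dR[OF u0] u0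
      by (auto intro!: derivative_eq_intros simp: algebra_simps)
    have "2 * R u \<le> u * R' u" by (rule ineq[OF u0])
    then have "0 \<le> R' u * (u * u) - R u * (2 * u)" using u0
      by (simp add: power2_eq_square algebra_simps)
    then show "0 \<le> (R' u * (u * u) - R u * (2 * u)) / ((u * u) * (u * u))" by simp
  qed (use t in auto)
  have limQ: "(Q \<longlongrightarrow> 0) (at_right 0)"
    unfolding Q_def
  proof (rule lhopital_right_0[where f' = R' and g' = "\<lambda>t. 2 * t"])
    show "(R \<longlongrightarrow> 0) (at_right 0)" by fact
    have "((\<lambda>t::real. t * t) \<longlongrightarrow> 0 * 0) (at_right 0)"
      by (rule tendsto_mult[OF tendsto_ident_at tendsto_ident_at])
    then show "((\<lambda>t::real. t * t) \<longlongrightarrow> 0) (at_right 0)" by simp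
    have ev: "\<forall>\<^sub>F t in at_right 0. 0 < t \<and> t \<le> h"
      unfolding eventually_at_right_field using h by (intro exI[of _ h]) auto
    show "\<forall>\<^sub>F t in at_right 0. (t::real) * t \<noteq> 0"
      using ev by eventually_elim simp
    show "\<forall>\<^sub>F t in at_right 0. 2 * t \<noteq> (0::real)"
      using ev by eventually_elim simp
    show "\<forall>\<^sub>F t in at_right 0. (R has_real_derivative R' t) (at t)"
      using ev by eventually_elim (use dR in auto)
    show "\<forall>\<^sub>F t in at_right 0. ((\<lambda>t::real. t * t) has_real_derivative 2 * t) (at t)"
      by (intro always_eventually allI) (auto intro!: derivative_eq_intros)
    show "((\<lambda>t. R' t / (2 * t)) \<longlongrightarrow> 0) (at_right 0)" by fact
  qed
  have ev2: "\<forall>\<^sub>F t in at_right 0. Q t \<le> Q h"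
    unfolding eventually_at_right_field using h mono by (intro exI[of _ h]) auto
  have "0 \<le> Q h" by (rule tendsto_upperbound[OF limQ ev2]) simp
  moreover have "h * h > 0" using h by simp
  ultimately show ?thesis by (simp add: Q_def zero_le_divide_iff)
qed



lemma stepE_fixed:
  fixes f g G :: "real \<Rightarrow> real" and p q a b \<delta> :: real
  assumes pa: "p < a" and ab: "a < b" and bq: "b + \<delta> < q" and \<delta>0: "\<delta> > 0"
    and dG: "\<And>x. p < x \<Longrightarrow> x < q \<Longrightarrow> (G has_real_derivative f x) (at x)"
    and df: "\<And>x. p < x \<Longrightarrow> x < q \<Longrightarrow> (f has_real_derivative g x) (at x)"
    and P3: "\<And>u v. p < u \<Longrightarrow> u < v \<Longrightarrow> v < q \<Longrightarrow>
               (f v - f u) / (v - u) \<le> 1/2 * ((g u + g v) / 2 + g ((u + v) / 2))"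
  shows "(f (\<delta> + (a+b)/2) - f ((a+b)/2)) / \<delta> \<le>
           ((G (\<delta> + b) - G b) / \<delta> - (G (\<delta> + a) - G a) / \<delta>) / (b - a)"
proof -
  define m where "m = (a+b)/2"
  define h where "h = (b-a)/2"
  have h0: "h > 0" using ab by (simp add: h_def)
  have am: "a = m - h" and bm: "b = m + h" by (simp_all add: m_def h_def field_simps)
  define H where "H x = (G (\<delta> + x) - G x) / \<delta>" for x
  define H1 where "H1 x = (f (\<delta> + x) - f x) / \<delta>" for x
  have dH: "(H has_real_derivative H1 x) (at x)" if "p < x" "x + \<delta> < q" for x
  proof -
    have "((\<lambda>z. G (\<delta> + z)) has_real_derivative f (\<delta> + x)) (at x)"
      using dG[of "\<delta> + x"] that \<delta>0 by (intro deriv_plus) auto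
    moreover have "(G has_real_derivative f x) (at x)" using dG that \<delta>0 by auto
    ultimately have "((\<lambda>z. (G (\<delta> + z) - G z) / \<delta>) has_real_derivative (f (\<delta> + x) - f x) / \<delta>) (at x)"
      by (intro DERIV_cdivide DERIV_diff) 
    then show ?thesis unfolding H_def H1_def by (simp add: fun_eq_iff)
  qed
  have dH1: "(H1 has_real_derivative (g (\<delta> + m) - g m) / \<delta>) (at m)"
  proof -
    have mm: "p < m" "\<delta> + m < q" using pa ab bq h0 am bm by auto
    have "((\<lambda>z. f (\<delta> + z)) has_real_derivative g (\<delta> + m)) (at m)"
      using df[of "\<delta> + m"] mm \<delta>0 by (intro deriv_plus) auto
    moreover have "(f has_real_derivative g m) (at m)" using df mm \<delta>0 by auto
    ultimately have "((\<lambda>z. (f (\<delta> + z) - f z) / \<delta>) has_real_derivative (g (\<delta> + m) - g m) / \<delta>) (at m)"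
      by (intro DERIV_cdivide DERIV_diff)
    then show ?thesis unfolding H1_def by (simp add: fun_eq_iff)
  qed
  define R where "R t = H (m + t) - H (m - t) - (2 * H1 m) * t" for t
  define R' where "R' t = H1 (m + t) - - H1 (m - t) - 2 * H1 m" for t
  have dR: "(R has_real_derivative R' t) (at t)" if "0 \<le> t" "t \<le> h" for t
  proof -
    have d1: "((\<lambda>z. H (m + z)) has_real_derivative H1 (m + t)) (at t)"
      using dH[of "m + t"] that pa bq am bm \<delta>0 by (intro deriv_plus) auto
    have d2: "((\<lambda>z. H (m - z)) has_real_derivative - H1 (m - t)) (at t)"
      using dH[of "m - t"] that pa bq am bm \<delta>0 by (intro deriv_minus) auto
    have d3: "((\<lambda>z. (2 * H1 m) * z) has_real_derivative (2 * H1 m)) (at t)"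
      using DERIV_cmult[OF DERIV_ident, of "2 * H1 m"] by simp
    have "R = (\<lambda>z. H (m + z) - H (m - z) - (2 * H1 m) * z)"
      by (rule ext) (simp add: R_def)
    then show ?thesis unfolding R'_def using DERIV_diff[OF DERIV_diff[OF d1 d2] d3] by simp
  qed
  have ineq: "2 * R t \<le> t * R' t" if t: "0 < t" "t \<le> h" for t
  proof -
    define \<Lambda> where "\<Lambda> \<sigma> = t * (f ((m+t)+\<sigma>) - f (m+t) + f ((m-t)+\<sigma>) - f (m-t) - 2 * (f (m+\<sigma>) - f m))
        - 2 * (G ((m+t)+\<sigma>) - G (m+t) - G ((m-t)+\<sigma>) + G (m-t) - 2 * t * (f (m+\<sigma>) - f m))" for \<sigma>
    define \<Lambda>' where "\<Lambda>' \<sigma> = t * (g ((m+t)+\<sigma>) + g ((m-t)+\<sigma>) - 2 * g (m+\<sigma>))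
        - 2 * (f ((m+t)+\<sigma>) - f ((m-t)+\<sigma>) - 2 * t * g (m+\<sigma>))" for \<sigma>
    have "\<Lambda> 0 \<le> \<Lambda> \<delta>"
    proof (rule deriv_nonneg_imp_mono[of 0 \<delta> \<Lambda> \<Lambda>'])
      fix \<sigma> assume s: "\<sigma> \<in> {0..\<delta>}"
      have r1: "p < (m-t)+\<sigma>" "(m+t)+\<sigma> < q" "(m-t)+\<sigma> < (m+t)+\<sigma>"
        using s t pa bq am bm by auto
      have r2: "p < (m+t)+\<sigma>" "(m-t)+\<sigma> < q" "p < m+\<sigma>" "m+\<sigma> < q"
        using r1 t by auto
      have e1: "((\<lambda>z. f ((m+t)+z)) has_real_derivative g ((m+t)+\<sigma>)) (at \<sigma>)"
        using df r1 r2 by (intro deriv_plus) auto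
      have e2: "((\<lambda>z. f ((m-t)+z)) has_real_derivative g ((m-t)+\<sigma>)) (at \<sigma>)"
        using df r1 r2 by (intro deriv_plus) auto
      have e3: "((\<lambda>z. f (m+z)) has_real_derivative g (m+\<sigma>)) (at \<sigma>)"
        using df r1 r2 by (intro deriv_plus) auto
      have e4: "((\<lambda>z. G ((m+t)+z)) has_real_derivative f ((m+t)+\<sigma>)) (at \<sigma>)"
        using dG r1 r2 by (intro deriv_plus) auto
      have e5: "((\<lambda>z. G ((m-t)+z)) has_real_derivative f ((m-t)+\<sigma>)) (at \<sigma>)"
        using dG r1 r2 by (intro deriv_plus) auto
      have "(\<Lambda> has_real_derivative
          t * (g ((m+t)+\<sigma>) - 0 + g ((m-t)+\<sigma>) - 0 - 2 * (g (m+\<sigma>) - 0))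
          - 2 * (f ((m+t)+\<sigma>) - 0 - f ((m-t)+\<sigma>) + 0 - 2 * t * (g (m+\<sigma>) - 0))) (at \<sigma>)"
        unfolding \<Lambda>_def
        by (intro DERIV_diff DERIV_add DERIV_cmult e1 e2 e3 e4 e5 DERIV_const)
      then show "(\<Lambda> has_real_derivative \<Lambda>' \<sigma>) (at \<sigma>)" by (simp add: \<Lambda>'_def)
      have Pi: "(f ((m+t)+\<sigma>) - f ((m-t)+\<sigma>)) / ((m+t)+\<sigma> - ((m-t)+\<sigma>)) \<le>
              1/2 * ((g ((m-t)+\<sigma>) + g ((m+t)+\<sigma>)) / 2 + g (((m-t)+\<sigma> + ((m+t)+\<sigma>)) / 2))"
        by (rule P3) (use r1 in auto)
      have eq1: "((m-t)+\<sigma> + ((m+t)+\<sigma>)) / 2 = m + \<sigma>" by simp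
      have eq2: "(m+t)+\<sigma> - ((m-t)+\<sigma>) = 2 * t" by simp
      from Pi have "(f ((m+t)+\<sigma>) - f ((m-t)+\<sigma>)) / (2 * t) \<le>
              1/2 * ((g ((m-t)+\<sigma>) + g ((m+t)+\<sigma>)) / 2 + g (m + \<sigma>))"
        unfolding eq1 eq2 .
      then have "f ((m+t)+\<sigma>) - f ((m-t)+\<sigma>) \<le>
              (1/2 * ((g ((m-t)+\<sigma>) + g ((m+t)+\<sigma>)) / 2 + g (m + \<sigma>))) * (2 * t)"
        using t by (simp add: pos_divide_le_eq)
      moreover have "1/2 * ((g ((m-t)+\<sigma>) + g ((m+t)+\<sigma>)) / 2 + g (m + \<sigma>)) * (2 * t)
          = t * g ((m-t)+\<sigma>) / 2 + t * g ((m+t)+\<sigma>) / 2 + t * g (m + \<sigma>)"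
        by (simp add: field_simps)
      moreover have "\<Lambda>' \<sigma> = t * g ((m+t)+\<sigma>) + t * g ((m-t)+\<sigma>) + 4 * (t * g (m+\<sigma>))
          - 2 * f ((m+t)+\<sigma>) + 2 * f ((m-t)+\<sigma>) - 2 * (t * g (m+\<sigma>))"
        unfolding \<Lambda>'_def by (simp add: algebra_simps)
      ultimately show "0 \<le> \<Lambda>' \<sigma>" by linarith
    qed (use \<delta>0 in auto)
    moreover have "\<Lambda> 0 = 0" by (simp add: \<Lambda>_def)
    moreover have "\<Lambda> \<delta> = \<delta> * (t * R' t - 2 * R t)"
      using \<delta>0 unfolding \<Lambda>_def R_def R'_def H_def H1_def by (simp add: field_simps)
    ultimately have "0 \<le> \<delta> * (t * R' t - 2 * R t)" by simp
    then show ?thesis using \<delta>0 by (simp add: zero_le_mult_iff)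
  qed
  have lim0: "(R \<longlongrightarrow> 0) (at_right 0)"
  proof -
    have "isCont R 0" using dR[of 0] h0 by (intro DERIV_isCont) auto
    then have "(R \<longlongrightarrow> R 0) (at 0)" by (simp add: isCont_def)
    moreover have "R 0 = 0" by (simp add: R_def)
    ultimately show ?thesis by (simp add: Lim_at_imp_Lim_at_within)
  qed
  have limq: "((\<lambda>t. R' t / (2 * t)) \<longlongrightarrow> 0) (at_right 0)"
  proof -
    have k1: "((\<lambda>z. H1 (m + z)) has_real_derivative (g (\<delta> + m) - g m) / \<delta>) (at 0)"
      using dH1 by (intro deriv_plus) simp
    have k2: "((\<lambda>z. H1 (m - z)) has_real_derivative - ((g (\<delta> + m) - g m) / \<delta>)) (at 0)"
      using dH1 by (intro deriv_minus) simp
    have k3: "((\<lambda>z. - H1 (m - z)) has_real_derivative (g (\<delta> + m) - g m) / \<delta>) (at 0)"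
      using DERIV_minus[OF k2] by simp
    have "(R' has_real_derivative ((g (\<delta> + m) - g m) / \<delta> - ((g (\<delta> + m) - g m) / \<delta>) - 0)) (at 0)"
      unfolding R'_def[abs_def] by (intro DERIV_diff k1 k3 DERIV_const)
    then have "(R' has_real_derivative 0) (at 0)" by simp
    then have "((\<lambda>t. R' t / t) \<longlongrightarrow> 0) (at_right 0)"
      by (rule quot_lim) (simp add: R'_def)
    then have "((\<lambda>t. R' t / t / 2) \<longlongrightarrow> 0 / 2) (at_right 0)"
      by (intro tendsto_divide tendsto_const) auto
    then show ?thesis by (simp add: mult.commute)
  qed
  have "R h \<ge> 0" by (rule key_mono[OF h0 dR ineq lim0 limq]) auto
  then have "H1 m * (2 * h) \<le> H b - H a" unfolding R_def am bm by (simp add: algebra_simps)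
  then have "H1 m \<le> (H b - H a) / (b - a)"
    using h0 by (simp add: am bm pos_le_divide_eq)
  then show ?thesis unfolding H_def H1_def m_def .
qed



lemma quot_lim2:
  assumes "(F has_real_derivative D) (at x)"
  shows "((\<lambda>d. (F (d + x) - F x) / d) \<longlongrightarrow> D) (at_right 0)"
proof -
  have "((\<lambda>d. (F (x + d) - F x) / d) \<longlongrightarrow> D) (at 0)" using assms by (simp add: DERIV_def)
  then have "((\<lambda>d. (F (d + x) - F x) / d) \<longlongrightarrow> D) (at 0)" by (simp add: add.commute)
  then show ?thesis by (rule Lim_at_imp_Lim_at_within)
qed

lemma stepE:
  assumes der: "\<forall>x\<in>J. (f has_real_derivative g x) (at x)"
    and iv: "\<forall>a\<in>J. \<forall>b\<in>J. \<forall>x. a \<le> x \<and> x \<le> b \<longrightarrow> x \<in> J"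
    and opn: "open J"
    and P3: "\<forall>a\<in>J. \<forall>b\<in>J. a < b \<longrightarrow>
           (f b - f a) / (b - a) \<le> 1/2 * ((g a + g b) / 2 + g ((a + b) / 2))"
  shows "\<forall>a\<in>J. \<forall>b\<in>J. a < b \<longrightarrow> g ((a+b)/2) \<le> (f b - f a) / (b - a)"
proof (intro ballI impI)
  fix a b assume a: "a \<in> J" and b: "b \<in> J" and ab: "a < b"
  obtain e1 where e1: "e1 > 0" "ball a e1 \<subseteq> J" using openE[OF opn a] by blast
  obtain e2 where e2: "e2 > 0" "ball b e2 \<subseteq> J" using openE[OF opn b] by blast
  define p where "p = a - e1/2"
  define q where "q = b + e2/2"
  have pJ: "p \<in> J" using e1 by (intro subsetD[OF e1(2)]) (simp add: p_def dist_real_def)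
  have qJ: "q \<in> J" using e2 by (intro subsetD[OF e2(2)]) (simp add: q_def dist_real_def)
  have pa: "p < a" using e1 by (simp add: p_def)
  have bq: "b < q" using e2 by (simp add: q_def)
  have sub: "{p..q} \<subseteq> J"
  proof
    fix x assume "x \<in> {p..q}"
    then show "x \<in> J" using iv[rule_format, OF pJ qJ, of x] by simp
  qed
  have derJ: "(f has_real_derivative g x) (at x)" if "x \<in> {p..q}" for x
    using der sub that by blast
  have contf: "continuous_on {p..q} f"
    by (rule continuous_at_imp_continuous_on) (use derJ DERIV_isCont in blast)
  define G where "G x = integral {p..x} f" for x
  have dG: "(G has_real_derivative f x) (at x)" if "p < x" "x < q" for x
  proof -
    have "(G has_real_derivative f x) (at x within {p..q})"
      unfolding G_def[abs_def] using that by (intro integral_has_real_derivative contf) auto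
    moreover have "at x within {p..q} = at x"
      by (rule at_within_interior) (use that in auto)
    ultimately show ?thesis by simp
  qed
  define m where "m = (a+b)/2"
  have mJ: "p < m" "m < q" using pa bq ab by (auto simp: m_def)
  have ev: "\<forall>\<^sub>F d in at_right 0.
      (f (d + m) - f m) / d \<le> ((G (d + b) - G b) / d - (G (d + a) - G a) / d) / (b - a)"
    unfolding eventually_at_right_field
  proof (intro exI[of _ "q - b"] conjI allI impI)
    show "0 < q - b" using bq by simp
    fix d :: real assume d: "0 < d" "d < q - b"
    have "(f (d + (a+b)/2) - f ((a+b)/2)) / d \<le>
           ((G (d + b) - G b) / d - (G (d + a) - G a) / d) / (b - a)"
    proof (rule stepE_fixed[of p a b d q G f g])
      show "p < a" "a < b" "b + d < q" "0 < d" using pa ab d by auto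
      show "\<And>x. p < x \<Longrightarrow> x < q \<Longrightarrow> (G has_real_derivative f x) (at x)" using dG by blast
      show "\<And>x. p < x \<Longrightarrow> x < q \<Longrightarrow> (f has_real_derivative g x) (at x)" using derJ by auto
      fix u v assume uv: "p < u" "u < v" "v < q"
      have "u \<in> J" "v \<in> J" using sub uv by auto
      then show "(f v - f u) / (v - u) \<le> 1/2 * ((g u + g v) / 2 + g ((u + v) / 2))"
        using P3 uv by blast
    qed
    then show "(f (d + m) - f m) / d \<le> ((G (d + b) - G b) / d - (G (d + a) - G a) / d) / (b - a)"
      by (simp add: m_def add.commute)
  qed
  have L1: "((\<lambda>d. (f (d + m) - f m) / d) \<longlongrightarrow> g m) (at_right 0)"
    by (rule quot_lim2) (use derJ mJ in auto)
  have L2: "((\<lambda>d. (G (d + b) - G b) / d) \<longlongrightarrow> f b) (at_right 0)"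
    by (rule quot_lim2) (use dG pa ab bq in auto)
  have L3: "((\<lambda>d. (G (d + a) - G a) / d) \<longlongrightarrow> f a) (at_right 0)"
    by (rule quot_lim2) (use dG pa ab bq in auto)
  have L: "((\<lambda>d. ((G (d + b) - G b) / d - (G (d + a) - G a) / d) / (b - a) - (f (d + m) - f m) / d)
             \<longlongrightarrow> (f b - f a) / (b - a) - g m) (at_right 0)"
    by (intro tendsto_intros L1 L2 L3) (use ab in auto)
  have ev': "\<forall>\<^sub>F d in at_right 0.
      0 \<le> ((G (d + b) - G b) / d - (G (d + a) - G a) / d) / (b - a) - (f (d + m) - f m) / d"
    using ev by eventually_elim simp
  have "0 \<le> (f b - f a) / (b - a) - g m"
    by (rule tendsto_lowerbound[OF L ev']) simp
  then show "g ((a+b)/2) \<le> (f b - f a) / (b - a)" by (simp add: m_def)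
qed


theorem theorem4:
  fixes I :: "real set" and f :: "real \<Rightarrow> real"
  assumes "is_interval I"
    and "continuous_on I f"
    and "\<forall>x\<in>interior I. f differentiable (at x)"
    and "continuous_on (interior I) (deriv f)"
  shows "(convex3_on I f \<longleftrightarrow>
           (\<forall>a\<in>interior I. \<forall>b\<in>interior I. a < b \<longrightarrow>
              deriv f ((a + b) / 2) \<le> (f b - f a) / (b - a)))
       \<and> (convex3_on I f \<longleftrightarrow>
           (\<forall>a\<in>interior I. \<forall>b\<in>interior I. a < b \<longrightarrow>
              (f b - f a) / (b - a) \<le> (1/2) * ((deriv f a + deriv f b) / 2 + deriv f ((a + b) / 2))))"
proof -
  define J where "J = interior I"
  have der: "\<forall>x\<in>J. (f has_real_derivative deriv f x) (at x)"
    using assms(3) unfolding J_def by (simp add: DERIV_deriv_iff_real_differentiable)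
  have contg: "continuous_on J (deriv f)" using assms(4) unfolding J_def .
  have ivI: "\<forall>a\<in>I. \<forall>b\<in>I. \<forall>x. a \<le> x \<and> x \<le> b \<longrightarrow> x \<in> I"
    using assms(1) unfolding is_interval_1 .
  have "convex I" using assms(1) unfolding is_interval_convex_1 .
  then have "convex J" unfolding J_def by (rule convex_interior)
  then have "is_interval J" unfolding is_interval_convex_1 .
  then have ivJ: "\<forall>a\<in>J. \<forall>b\<in>J. \<forall>x. a \<le> x \<and> x \<le> b \<longrightarrow> x \<in> J"
    unfolding is_interval_1 .
  have opn: "open J" unfolding J_def by simp
  have JI: "J \<subseteq> I" unfolding J_def by (rule interior_subset)
  have IJ: "\<forall>a\<in>I. \<forall>b\<in>I. \<forall>x. a < x \<and> x < b \<longrightarrow> x \<in> J"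
  proof (intro ballI allI impI)
    fix a b x assume a: "a \<in> I" and b: "b \<in> I" and x: "a < x \<and> x < b"
    have "{a<..<b} \<subseteq> I"
    proof
      fix y assume "y \<in> {a<..<b}"
      then show "y \<in> I" using ivI[rule_format, OF a b, of y] by simp
    qed
    then have "{a<..<b} \<subseteq> J" unfolding J_def by (rule interior_maximal) simp
    then show "x \<in> J" using x by auto
  qed
  let ?P2 = "\<forall>a\<in>J. \<forall>b\<in>J. a < b \<longrightarrow> deriv f ((a + b) / 2) \<le> (f b - f a) / (b - a)"
  let ?P3 = "\<forall>a\<in>J. \<forall>b\<in>J. a < b \<longrightarrow>
              (f b - f a) / (b - a) \<le> 1/2 * ((deriv f a + deriv f b) / 2 + deriv f ((a + b) / 2))"
  let ?CV = "\<forall>x\<in>J. \<forall>y\<in>J. \<forall>z\<in>J. x < y \<longrightarrow> y < z \<longrightarrow>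
                 deriv f y \<le> ((z - y) * deriv f x + (y - x) * deriv f z) / (z - x)"
  have A: "convex3_on I f \<Longrightarrow> ?P2" by (rule stepA[OF _ JI der ivJ])
  have B: "?P2 \<Longrightarrow> ?CV" by (rule stepB[OF der ivJ contg])
  have C: "?CV \<Longrightarrow> convex3_on I f" by (rule stepC[OF ivI IJ assms(2) der])
  have D: "?CV \<Longrightarrow> ?P3" by (rule stepD[OF der ivJ])
  have E: "?P3 \<Longrightarrow> ?P2" by (rule stepE[OF der ivJ opn])
  have "(convex3_on I f \<longleftrightarrow> ?P2) \<and> (convex3_on I f \<longleftrightarrow> ?P3)"
    using A B C D E by blast
  from this[unfolded J_def] show ?thesis .
qed


end
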